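(* Let $p$ be a prime, $a\ge 1$ an integer, and $n=p^a$. With $L$ and $R$ the matrices indexed by $P(n)$ defined in the context, \[\dim\ker (RL^{-1}) \ge \binom{a}{2}=\frac{a(a-1)}{2}.\]
   Context: Let $\phi$ denote Euler's totient function. For a positive integer $n$ let $P(n)=\{(i,j): j\mid n,\ i\mid j\}$. Define square matrices $L$ and $R$ with rows and columns indexed by $P(n)$ as follows. For a row index $(i,j)$ and a column index $(d,c)$: $L_{(i,j)}^{(d,c)} = \phi(d)\,\frac{n}{\operatorname{lcm}(j,c)}$ if $d\mid i$ and $j\mid \operatorname{lcm}(i,c)$, and $0$ otherwise. For the row $(i,j)$, let $v$ be the largest divisor of $i$ coprime with $j/i$ and put $u=i/v$. Then $R_{(i,j)}^{(e,c)} = u\,\phi(ev/j)\,\frac{n}{\operatorname{lcm}(j,c)}$ if $(j/v)\mid e$, $e\mid j$ and $j\mid\operatorname{lcm}(i,c)$, and $0$ otherwise. The matrix $L$ is invertible. *)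

theory Defs
  imports "HOL-Number_Theory.Number_Theory" "HOL-Library.Product_Lexorder"
    "Jordan_Normal_Form.Matrix_Kernel" "Jordan_Normal_Form.Gauss_Jordan_Elimination"
begin

definition Pset :: "nat \<Rightarrow> (nat \<times> nat) set" where
  "Pset n = {(i, j). j dvd n \<and> i dvd j}"

text \<open>A fixed enumeration of P(n) (lexicographic order); the kernel dimension
  does not depend on the chosen enumeration.\<close>
definition Plist :: "nat \<Rightarrow> (nat \<times> nat) list" where
  "Plist n = sorted_list_of_set (Pset n)"

definition L_entry :: "nat \<Rightarrow> nat \<times> nat \<Rightarrow> nat \<times> nat \<Rightarrow> rat" where
  "L_entry n r cl = (case r of (i, j) \<Rightarrow> case cl of (d, c) \<Rightarrow>
     if d dvd i \<and> j dvd lcm i c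
     then of_nat (totient d) * of_nat (n div lcm j c) else 0)"

definition vpart :: "nat \<Rightarrow> nat \<Rightarrow> nat" where
  "vpart i j = Max {v. v dvd i \<and> coprime v (j div i)}"

definition R_entry :: "nat \<Rightarrow> nat \<times> nat \<Rightarrow> nat \<times> nat \<Rightarrow> rat" where
  "R_entry n r cl = (case r of (i, j) \<Rightarrow> case cl of (e, c) \<Rightarrow>
     let v = vpart i j; u = i div v in
     if (j div v) dvd e \<and> e dvd j \<and> j dvd lcm i c
     then of_nat u * of_nat (totient (e * v div j)) * of_nat (n div lcm j c) else 0)"

definition Lmat :: "nat \<Rightarrow> rat mat" where
  "Lmat n = mat (length (Plist n)) (length (Plist n))
     (\<lambda>(a, b). L_entry n (Plist n ! a) (Plist n ! b))"

definition Rmat :: "nat \<Rightarrow> rat mat" where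
  "Rmat n = mat (length (Plist n)) (length (Plist n))
     (\<lambda>(a, b). R_entry n (Plist n ! a) (Plist n ! b))"

end

theory Submission
  imports Defs
begin


lemma kernel_dim_wide:
  fixes D :: "'a::field mat"
  assumes D: "D \<in> carrier_mat k N"
  shows "N - k \<le> kernel_dim D"
proof -
  let ?C = "gauss_jordan_single D"
  from gauss_jordan_single[OF D refl]
  obtain P Q where CP: "?C = P * D" and QP: "Q * P = 1\<^sub>m k" and
    P: "P \<in> carrier_mat k k" and Q: "Q \<in> carrier_mat k k" and C: "?C \<in> carrier_mat k N"
    and row: "row_echelon_form ?C" by auto
  interpret K: kernel k N ?C by (unfold_locales, rule C)
  from mat_kernel_mult_eq[OF D P Q QP, folded CP]
  have "kernel_dim D = K.dim" unfolding kernel_dim_def using D by simp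
  also have "\<dots> = N - card {i. i < k \<and> row ?C i \<noteq> 0\<^sub>v N}" using find_base_vectors[OF row C] by auto
  also have "card {i. i < k \<and> row ?C i \<noteq> 0\<^sub>v N} \<le> k"
    using card_mono[of "{..<k}" "{i. i < k \<and> row ?C i \<noteq> 0\<^sub>v N}"] by auto
  hence "N - k \<le> N - card {i. i < k \<and> row ?C i \<noteq> 0\<^sub>v N}" by simp
  finally show ?thesis by simp
qed

lemma kernel_dim_mono:
  fixes D :: "'a::field mat"
  assumes D: "D \<in> carrier_mat k N" and A: "A \<in> carrier_mat m N"
    and sub: "mat_kernel D \<subseteq> mat_kernel A"
  shows "kernel_dim D \<le> kernel_dim A"
proof -
  interpret KD: kernel k N D by (unfold_locales, rule D)
  interpret KA: kernel m N A by (unfold_locales, rule A)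
  obtain B where fB: "finite B" and bB: "KD.basis B" using kernel_basis_exists[OF D] by auto
  have dB: "KD.dim = card B" using KD.Ker.dim_basis[OF fB bB] .
  have Bsub: "B \<subseteq> mat_kernel D" and li: "KD.lin_indpt B" using bB unfolding KD.Ker.basis_def by auto
  have li2: "\<not> KD.NC.lin_dep B" using li KD.lindep_same[OF Bsub] by simp
  have BA: "B \<subseteq> mat_kernel A" using Bsub sub by auto
  have li3: "KA.lin_indpt B" using li2 KA.lindep_same[OF BA] by simp
  obtain BB where fBB: "finite BB" and bBB: "KA.basis BB" using kernel_basis_exists[OF A] by auto
  have fd: "KA.Ker.fin_dim" unfolding KA.Ker.fin_dim_def using fBB bBB unfolding KA.Ker.basis_def by auto
  have "card B \<le> KA.dim" using KA.Ker.li_le_dim(2)[OF fd BA li3] .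
  thus ?thesis using dB by simp
qed



lemma ppow_dvd_iff: "prime (p::nat) \<Longrightarrow> p^x dvd p^s \<longleftrightarrow> x \<le> s"
  by (rule dvd_power_iff_le) (simp add: prime_ge_2_nat)

lemma ppow_lcm: "prime (p::nat) \<Longrightarrow> lcm (p^s) (p^y) = p^(max s y)"
proof (cases "s \<le> y")
  case True assume "prime p"
  then have "p^s dvd p^y" using True ppow_dvd_iff by blast
  then show ?thesis using True by (simp add: lcm_proj2_if_dvd max_def)
next
  case False assume "prime p"
  then have "p^y dvd p^s" using False ppow_dvd_iff by simp
  then show ?thesis using False by (simp add: lcm_proj1_if_dvd max_def)
qed

lemma vpart_lt: assumes p: "prime (p::nat)" and st: "s < t" shows "vpart (p^s) (p^t) = 1"
proof -
  have d: "p^t div p^s = p^(t-s)" using p st by (simp add: power_diff prime_gt_0_nat)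
  have "{v. v dvd p^s \<and> coprime v (p^t div p^s)} = {1}"
  proof safe
    fix v assume v: "v dvd p^s" "coprime v (p^t div p^s)"
    then obtain k where k: "k \<le> s" "v = p^k" using divides_primepow_nat[OF p] by auto
    show "v = 1"
    proof (rule ccontr)
      assume "v \<noteq> 1" then have "k > 0" using k by auto
      then have "p dvd v" "p dvd p^(t-s)" using k st by auto
      then show False using v(2) d p
        by (metis coprime_common_divisor_nat not_prime_1)
    qed
  qed auto
  then show ?thesis unfolding vpart_def by simp
qed

lemma Pset_pp: assumes p: "prime (p::nat)"
  shows "Pset (p^a) = (\<lambda>(s,t). (p^s, p^t)) ` {(s,t). s \<le> t \<and> t \<le> a}"
proof safe
  fix i j assume "(i,j) \<in> Pset (p^a)"
  then have h: "j dvd p^a" "i dvd j" unfolding Pset_def by auto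
  obtain t where t: "t \<le> a" "j = p^t" using divides_primepow_nat[OF p] h(1) by auto
  obtain s where s: "s \<le> t" "i = p^s" using divides_primepow_nat[OF p] h(2) t by auto
  show "(i,j) \<in> (\<lambda>(s,t). (p^s, p^t)) ` {(s,t). s \<le> t \<and> t \<le> a}"
    using s t by (intro image_eqI[of _ _ "(s,t)"]) auto
next
  fix s t assume "s \<le> t" "t \<le> a"
  then show "(p^s, p^t) \<in> Pset (p^a)" unfolding Pset_def using ppow_dvd_iff[OF p] by auto
qed

definition T :: "nat \<Rightarrow> (nat \<times> nat) set" where "T a = {(s,t). s \<le> t \<and> t \<le> a}"

lemma T_fin: "finite (T a)"
  by (rule finite_subset[of _ "{..a} \<times> {..a}"]) (auto simp: T_def)

lemma T_card: "card (T a) = (a choose 2) + 2*a + 1"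
proof (induction a)
  case 0
  have "T 0 = {(0,0)}" by (auto simp: T_def)
  then show ?case by simp
next
  case (Suc a)
  have e: "T (Suc a) = T a \<union> (\<lambda>s. (s, Suc a)) ` {..Suc a}" by (auto simp: T_def)
  have "card (T (Suc a)) = card (T a) + card ((\<lambda>s. (s, Suc a)) ` {..Suc a})"
    unfolding e by (rule card_Un_disjoint) (auto simp: T_def T_fin[unfolded T_def])
  also have "card ((\<lambda>s. (s, Suc a)) ` {..Suc a}) = Suc a + 1"
    by (subst card_image) (auto simp: inj_on_def)
  moreover have "Suc a choose 2 = (a choose 2) + a" by (simp add: numeral_2_eq_2)
  ultimately show ?case using Suc by simp
qed



lemma mult_entry_sum:
  assumes R: "R \<in> carrier_mat N N" and B: "B \<in> carrier_mat N N" and i: "i < N" and j: "j < N"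
  shows "(R * B) $$ (i,j) = (\<Sum>l\<in>{0..<N}. R $$ (i,l) * B $$ (l,j))"
  using R B i j by (simp add: index_mult_mat scalar_prod_def)

lemma mult_vec_sum:
  assumes A: "A \<in> carrier_mat m N" and v: "v \<in> carrier_vec N" and i: "i < m"
  shows "(A *\<^sub>v v) $ i = (\<Sum>l\<in>{0..<N}. A $$ (i,l) * v $ l)"
  using A v i by (simp add: scalar_prod_def)

lemma kernel_dim_rows:
  fixes R B :: "'a::field mat"
  assumes R: "R \<in> carrier_mat N N" and B: "B \<in> carrier_mat N N"
    and S: "S \<subseteq> {..<N}"
    and rows: "\<forall>i<N. \<exists>i'\<in>S. \<exists>c. \<forall>j<N. R$$(i,j) = c * R$$(i',j)"
  shows "N - card S \<le> kernel_dim (R * B)"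
proof -
  let ?A = "R * B"
  have A: "?A \<in> carrier_mat N N" using R B by auto
  have fS: "finite S" using S finite_subset by blast
  define k where "k = card S"
  define g where "g r = sorted_list_of_set S ! r" for r
  have gS: "g r \<in> S" if "r < k" for r
    using that fS unfolding g_def k_def
    by (metis nth_mem sorted_list_of_set.length_sorted_key_list_of_set sorted_list_of_set.set_sorted_key_list_of_set)
  have Sg: "\<exists>r<k. g r = x" if "x \<in> S" for x
    using that fS unfolding g_def k_def
    by (metis in_set_conv_nth sorted_list_of_set.length_sorted_key_list_of_set sorted_list_of_set.set_sorted_key_list_of_set)
  define D where "D = mat k N (\<lambda>(r,j). ?A $$ (g r, j))"
  have D: "D \<in> carrier_mat k N" unfolding D_def by auto
  have Arows: "\<exists>i'\<in>S. \<exists>c. \<forall>j<N. ?A$$(i,j) = c * ?A$$(i',j)" if i: "i < N" for i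
  proof -
    obtain i' c where i': "i' \<in> S" and c: "\<forall>j<N. R$$(i,j) = c * R$$(i',j)" using rows i by blast
    have "i' < N" using i' S by auto
    have "?A$$(i,j) = c * ?A$$(i',j)" if j: "j < N" for j
      unfolding mult_entry_sum[OF R B i j] mult_entry_sum[OF R B \<open>i' < N\<close> j] sum_distrib_left
      by (rule sum.cong) (use c in auto)
    then show ?thesis using i' by blast
  qed
  have sub: "mat_kernel D \<subseteq> mat_kernel ?A"
  proof
    fix v assume v: "v \<in> mat_kernel D"
    have vc: "v \<in> carrier_vec N" and Dv: "D *\<^sub>v v = 0\<^sub>v k" using mat_kernelD[OF D v] by auto
    have "?A *\<^sub>v v = 0\<^sub>v N"
    proof (rule eq_vecI)
      fix i assume "i < dim_vec (0\<^sub>v N :: 'a vec)"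
      then have i: "i < N" by simp
      obtain i' c where i': "i' \<in> S" and c: "\<forall>j<N. ?A$$(i,j) = c * ?A$$(i',j)" using Arows[OF i] by blast
      obtain r where r: "r < k" "g r = i'" using Sg[OF i'] by blast
      have i'N: "i' < N" using i' S by auto
      have "(?A *\<^sub>v v) $ i = (\<Sum>l\<in>{0..<N}. ?A $$ (i,l) * v $ l)" by (rule mult_vec_sum[OF A vc i])
      also have "\<dots> = c * (\<Sum>l\<in>{0..<N}. ?A $$ (i',l) * v $ l)"
        unfolding sum_distrib_left by (rule sum.cong) (use c in auto)
      also have "(\<Sum>l\<in>{0..<N}. ?A $$ (i',l) * v $ l) = (D *\<^sub>v v) $ r"
        unfolding mult_vec_sum[OF D vc r(1)] using r unfolding D_def by simp
      also have "\<dots> = 0" using Dv r by simp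
      finally show "(?A *\<^sub>v v) $ i = (0\<^sub>v N) $ i" using i by simp
    qed (use R in simp)
    then show "v \<in> mat_kernel ?A" by (rule mat_kernelI[OF A vc])
  qed
  show ?thesis using kernel_dim_wide[OF D] kernel_dim_mono[OF D A sub] unfolding k_def by linarith
qed



lemma R_rel: assumes p: "prime (p::nat)" and st: "s < t"
  shows "R_entry n (p^s,p^t) (p^x,p^y) = of_nat (p^s) * R_entry n (1,p^t) (p^x,p^y)"
proof -
  have v1: "vpart (p^s) (p^t) = 1" using vpart_lt[OF p st] .
  have v0: "vpart 1 (p^t) = 1" using vpart_lt[OF p, of 0 t] st by simp
  have c: "(p^t dvd lcm (p^s) (p^y)) = (p^t dvd lcm 1 (p^y))"
    using st by (simp add: ppow_lcm[OF p] ppow_dvd_iff[OF p] max_def)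
  have v0': "vpart (Suc 0) (p^t) = 1" using v0 by simp
  show ?thesis unfolding R_entry_def Let_def using c by (simp add: v1 v0')
qed

lemma L_tri: assumes p: "prime (p::nat)" and "s \<le> t" "t \<le> a" "x \<le> y" "y \<le> a"
  and ne: "L_entry n (p^s,p^t) (p^x,p^y) \<noteq> 0"
  shows "x*(a+1)+(a-y) \<le> s*(a+1)+(a-t) \<and> (x*(a+1)+(a-y) = s*(a+1)+(a-t) \<longrightarrow> x = s \<and> y = t)"
proof -
  have c: "x \<le> s" "t \<le> max s y" using ne unfolding L_entry_def
    by (auto simp: ppow_lcm[OF p] ppow_dvd_iff[OF p] split: if_splits)
  show ?thesis
  proof (cases "x < s")
    case True
    then have "(x+1)*(a+1) \<le> s*(a+1)" by (intro mult_le_mono1) simp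
    then show ?thesis by (auto simp: algebra_simps)
  next
    case False
    then have xs: "x = s" using c by simp
    then have "t \<le> y" using c assms by (auto simp: max_def split: if_splits)
    then show ?thesis using xs assms by auto
  qed
qed

lemma L_diag: assumes p: "prime (p::nat)" and "s \<le> t" "t \<le> a"
  shows "L_entry (p^a) (p^s,p^t) (p^s,p^t) \<noteq> 0"
proof -
  have "p^t dvd p^a" using assms ppow_dvd_iff[OF p] by simp
  then have "p^a div p^t > 0" using p
    by (metis dvd_div_eq_0_iff gr0I power_not_zero prime_gt_0_nat less_irrefl)
  moreover have "totient (p^s) > 0" using p by (simp add: prime_gt_0_nat)
  ultimately show ?thesis unfolding L_entry_def
    using assms by (simp add: ppow_lcm[OF p] ppow_dvd_iff[OF p])
qed



theorem proposition5p1: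
  fixes p a n :: nat
  assumes "prime p" and "a \<ge> 1" and "n = p ^ a"
  shows "kernel_dim (Rmat n * the (mat_inverse (Lmat n))) \<ge> a choose 2"
proof -
  have p: "prime p" by fact
  define N where "N = length (Plist n)"
  have Pn: "Pset n = (\<lambda>(s,t). (p^s, p^t)) ` T a" using Pset_pp[OF p] assms(3) unfolding T_def by simp
  have finP: "finite (Pset n)" unfolding Pn using T_fin by simp
  have setPL: "set (Plist n) = Pset n" unfolding Plist_def using finP by simp
  have dist: "distinct (Plist n)" unfolding Plist_def by simp
  have injT: "inj_on (\<lambda>(s,t). (p^s, p^t)) (T a)"
    using p prime_gt_1_nat by (auto simp: inj_on_def power_inject_exp)
  have NP: "N = card (Pset n)" unfolding N_def using distinct_card[OF dist] setPL by simp
  have Ncard: "N = (a choose 2) + 2*a + 1" unfolding NP Pn card_image[OF injT] T_card ..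
  have elem: "\<exists>s t. s \<le> t \<and> t \<le> a \<and> Plist n ! j = (p^s,p^t)" if "j < N" for j
  proof -
    have "Plist n ! j \<in> Pset n" using that setPL unfolding N_def by (metis nth_mem)
    then show ?thesis unfolding Pn T_def by auto
  qed
  have Lc: "Lmat n \<in> carrier_mat N N" unfolding Lmat_def N_def by simp
  have Rc: "Rmat n \<in> carrier_mat N N" unfolding Rmat_def N_def by simp
  have Lent: "Lmat n $$ (i,j) = L_entry n (Plist n ! i) (Plist n ! j)" if "i < N" "j < N" for i j
    using that unfolding Lmat_def N_def by simp
  have Rent: "Rmat n $$ (i,j) = R_entry n (Plist n ! i) (Plist n ! j)" if "i < N" "j < N" for i j
    using that unfolding Rmat_def N_def by simp
  define mu where "mu q = multiplicity p (fst q) * (a+1) + (a - multiplicity p (snd q))" for q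
  have mupp: "mu (p^s,p^t) = s*(a+1) + (a - t)" for s t
    unfolding mu_def using p by simp
  have Linj: "v = 0\<^sub>v N" if v: "v \<in> carrier_vec N" and Lv: "Lmat n *\<^sub>v v = 0\<^sub>v N" for v
  proof -
    have key: "\<forall>j<N. mu (Plist n ! j) = m \<longrightarrow> v $ j = 0" for m
    proof (induction m rule: less_induct)
      case (less m)
      show ?case
      proof (intro allI impI)
        fix j assume j: "j < N" and mj: "mu (Plist n ! j) = m"
        obtain s t where st: "s \<le> t" "t \<le> a" "Plist n ! j = (p^s,p^t)" using elem[OF j] by blast
        have others: "Lmat n $$ (j,l) * v $ l = 0" if l: "l \<in> {0..<N} - {j}" for l
        proof (cases "Lmat n $$ (j,l) = 0")
          case False
          have lN: "l < N" using l by simp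
          obtain x y where xy: "x \<le> y" "y \<le> a" "Plist n ! l = (p^x,p^y)" using elem[OF lN] by blast
          have ne: "L_entry n (p^s,p^t) (p^x,p^y) \<noteq> 0" using False Lent[OF j lN] st(3) xy(3) by simp
          note tri = L_tri[OF p st(1,2) xy(1,2) ne]
          have "Plist n ! l \<noteq> Plist n ! j" using lN j l dist unfolding N_def by (simp add: nth_eq_iff_index_eq)
          then have "\<not> (x = s \<and> y = t)" using xy(3) st(3) by auto
          moreover have "mu (Plist n ! l) = x*(a+1)+(a-y)" using xy(3) mupp by simp
          moreover have "mu (Plist n ! j) = s*(a+1)+(a-t)" using st(3) mupp by simp
          ultimately have "mu (Plist n ! l) < m" using tri mj by linarith
          then have "v $ l = 0" using less l by auto
          then show ?thesis by simp
        qed simp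
        have "0 = (Lmat n *\<^sub>v v) $ j" using Lv j by simp
        also have "\<dots> = (\<Sum>l\<in>{0..<N}. Lmat n $$ (j,l) * v $ l)" by (rule mult_vec_sum[OF Lc v j])
        also have "\<dots> = Lmat n $$ (j,j) * v $ j + (\<Sum>l\<in>{0..<N} - {j}. Lmat n $$ (j,l) * v $ l)"
          using j by (subst sum.remove[of _ j]) auto
        also have "(\<Sum>l\<in>{0..<N} - {j}. Lmat n $$ (j,l) * v $ l) = 0"
          using others by (intro sum.neutral) auto
        finally have "Lmat n $$ (j,j) * v $ j = 0" by simp
        moreover have "Lmat n $$ (j,j) \<noteq> 0" using Lent[OF j j] st L_diag[OF p st(1,2)] assms(3) by simp
        ultimately show "v $ j = 0" by simp
      qed
    qed
    show ?thesis using key v by (intro eq_vecI) auto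
  qed
  have "det (Lmat n) \<noteq> 0" using det_0_iff_vec_prod_zero_field[OF Lc] Linj by blast
  from det_non_zero_imp_unit[OF Lc this, of "()"]
  have U: "Lmat n \<in> Units (ring_mat TYPE(rat) N ())" .
  have "mat_inverse (Lmat n) \<noteq> None"
  proof
    assume "mat_inverse (Lmat n) = None"
    from mat_inverse(1)[OF Lc this, where b="()"] U show False by simp
  qed
  then obtain B where B: "mat_inverse (Lmat n) = Some B" by auto
  have Bc: "B \<in> carrier_mat N N" using mat_inverse(2)[OF Lc B] by simp
  define Q where "Q = (\<lambda>s. (p^s,p^s)) ` {..a} \<union> (\<lambda>t. (1::nat,p^t)) ` {1..a}"
  define S where "S = {i. i < N \<and> Plist n ! i \<in> Q}"
  have SN: "S \<subseteq> {..<N}" unfolding S_def by auto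
  have "card S \<le> card Q"
  proof -
    have "inj_on (\<lambda>i. Plist n ! i) S" using dist unfolding S_def N_def
      by (auto simp: inj_on_def nth_eq_iff_index_eq)
    then have "card S = card ((\<lambda>i. Plist n ! i) ` S)" by (simp add: card_image)
    also have "\<dots> \<le> card Q" by (rule card_mono) (auto simp: Q_def S_def)
    finally show ?thesis .
  qed
  also have "card Q \<le> card ((\<lambda>s. (p^s,p^s)) ` {..a}) + card ((\<lambda>t. (1::nat,p^t)) ` {1..a})"
    unfolding Q_def by (rule card_Un_le)
  also have "\<dots> \<le> card {..a} + card {1..a}" by (intro add_mono card_image_le) auto
  finally have cS: "card S \<le> 2*a + 1" by simp
  have rows: "\<forall>i<N. \<exists>i'\<in>S. \<exists>c. \<forall>j<N. Rmat n $$ (i,j) = c * Rmat n $$ (i',j)"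
  proof (intro allI impI)
    fix i assume i: "i < N"
    obtain s t where st: "s \<le> t" "t \<le> a" "Plist n ! i = (p^s,p^t)" using elem[OF i] by blast
    show "\<exists>i'\<in>S. \<exists>c. \<forall>j<N. Rmat n $$ (i,j) = c * Rmat n $$ (i',j)"
    proof (cases "s = t")
      case True
      then have "i \<in> S" using i st unfolding S_def Q_def by auto
      then show ?thesis by (intro bexI[of _ i] exI[of _ 1]) auto
    next
      case False
      then have lt: "s < t" using st by simp
      have "(p^0, p^t) \<in> Pset n" unfolding Pn T_def using st by (intro image_eqI[of _ _ "(0,t)"]) auto
      then have "(1, p^t) \<in> set (Plist n)" using setPL by simp
      then obtain i' where i': "i' < N" "Plist n ! i' = (1, p^t)" unfolding N_def by (metis in_set_conv_nth)
      have "i' \<in> S" using i' lt st unfolding S_def Q_def by auto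
      moreover have "\<forall>j<N. Rmat n $$ (i,j) = of_nat (p^s) * Rmat n $$ (i',j)"
      proof (intro allI impI)
        fix j assume j: "j < N"
        obtain x y where xy: "x \<le> y" "y \<le> a" "Plist n ! j = (p^x,p^y)" using elem[OF j] by blast
        show "Rmat n $$ (i,j) = of_nat (p^s) * Rmat n $$ (i',j)"
          using Rent[OF i j] Rent[OF i'(1) j] st i' xy R_rel[OF p lt] by simp
      qed
      ultimately show ?thesis by blast
    qed
  qed
  have "N - card S \<le> kernel_dim (Rmat n * B)" by (rule kernel_dim_rows[OF Rc Bc SN rows])
  then show ?thesis using B cS Ncard by simp
qed

end
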